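(* Let $f,g:\mathbb{R}\to\mathbb{R}$ be $\mathcal{C}^2$ functions such that $f''(u)\ge c_0$ and $g''(u)\ge c_0$ for some $c_0>0$ and all $u\in\mathbb{R}$, and $f(u)>g(u)$ for all $u\in\mathbb{R}$. Let $u^->u^+$ and $\theta^-,\theta^+\in\{0,1\}$ with $\theta^-\neq\theta^+$, and let $$\lambda=\frac{[\theta^+f(u^+)+(1-\theta^+)g(u^+)]-[\theta^-f(u^-)+(1-\theta^-)g(u^-)]}{u^+-u^-}.$$ Then the jump satisfies the Lax admissibility conditions $$\theta^+f'(u^+)+(1-\theta^+)g'(u^+)\;\le\;\lambda\;\le\;\theta^-f'(u^-)+(1-\theta^-)g'(u^-)$$ in each of the following two cases: (1) $\theta^-=1$, $\theta^+=0$ and $u^-\ge u^*$, where $(u^*,f(u^* ))$ is the unique point with $u^*>u^+$ at which a straight line through $(u^+,g(u^+))$ touches the graph of $f$ tangentially; (2) $\theta^-=0$, $\theta^+=1$ and $u^+\le v^*$, where $(v^*,f(v^* ))$ is the unique point with $v^*<u^-$ at which a straight line through $(u^-,g(u^-))$ touches the graph of $f$ tangentially.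
   Context: This concerns jumps of weak solutions of the conservation law $u_t+[\theta(u_x)f(u)+(1-\theta(u_x))g(u)]_x=0$, where $\theta(s)=1$ for $s>0$ and $\theta(s)=0$ for $s<0$. A jump connects a left state $(u^-,\theta^-)$ to a right state $(u^+,\theta^+)$, traveling with the Rankine–Hugoniot speed $\lambda$ given in the claim. *)

theory Defs
  imports "HOL-Analysis.Analysis"
begin

definition flux :: "(real \<Rightarrow> real) \<Rightarrow> (real \<Rightarrow> real) \<Rightarrow> real \<Rightarrow> real \<Rightarrow> real" where
  "flux f g th u = th * f u + (1 - th) * g u"

definition rh_speed :: "(real \<Rightarrow> real) \<Rightarrow> (real \<Rightarrow> real) \<Rightarrow> real \<Rightarrow> real \<Rightarrow> real \<Rightarrow> real \<Rightarrow> real" where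
  "rh_speed f g um thetam up thetap = (flux f g thetap up - flux f g thetam um) / (up - um)"

end

theory Submission
  imports Defs
begin

lemma mono_of_deriv:
  fixes F F' :: "real \<Rightarrow> real"
  assumes "\<And>u. (F has_real_derivative F' u) (at u)" "\<And>u. a \<le> u \<Longrightarrow> u \<le> b \<Longrightarrow> F' u \<ge> 0" "a \<le> b"
  shows "F a \<le> F b"
  using DERIV_nonneg_imp_nondecreasing[of a b F] assms by blast

lemma tangent_below:
  fixes g g' g'' :: "real \<Rightarrow> real"
  assumes g1: "\<And>u. (g has_real_derivative g' u) (at u)"
      and g2: "\<And>u. (g' has_real_derivative g'' u) (at u)"
      and gc: "\<And>u. g'' u \<ge> 0"
  shows "g y \<ge> g x + g' x * (y - x)"
proof -
  have gm: "g' a \<le> g' b" if "a \<le> b" for a b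
    using mono_of_deriv[of g' g'' a b] g2 gc that by blast
  have d: "\<And>u. ((\<lambda>t. g t - g' x * t) has_real_derivative (g' u - g' x)) (at u)"
    using g1 by (auto intro!: derivative_eq_intros)
  show ?thesis
  proof (cases "x \<le> y")
    case True
    have "g x - g' x * x \<le> g y - g' x * y"
      using mono_of_deriv[OF d, of x y] gm True by auto
    then show ?thesis by (simp add: algebra_simps)
  next
    case False
    have d2: "\<And>u. ((\<lambda>t. g' x * t - g t) has_real_derivative (g' x - g' u)) (at u)"
      using g1 by (auto intro!: derivative_eq_intros)
    have "(\<lambda>t. g' x * t - g t) y \<le> (\<lambda>t. g' x * t - g t) x"
      using mono_of_deriv[OF d2, of y x] gm False by auto
    then show ?thesis by (simp add: algebra_simps)
  qed
qed

theorem lemma2p2: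
  fixes f g f' g' f'' g'' :: "real \<Rightarrow> real" and c0 um up thetam thetap :: real
  assumes f1: "\<And>u. (f has_real_derivative f' u) (at u)"
      and f2: "\<And>u. (f' has_real_derivative f'' u) (at u)"
      and f2c: "continuous_on UNIV f''"
      and g1: "\<And>u. (g has_real_derivative g' u) (at u)"
      and g2: "\<And>u. (g' has_real_derivative g'' u) (at u)"
      and g2c: "continuous_on UNIV g''"
      and c0: "c0 > 0"
      and fconv: "\<And>u. f'' u \<ge> c0"
      and gconv: "\<And>u. g'' u \<ge> c0"
      and fg: "\<And>u. f u > g u"
      and ord: "um > up"
      and thetam: "thetam \<in> {0, 1}" and thetap: "thetap \<in> {0, 1}" and thne: "thetam \<noteq> thetap"
      and cases:
        "(thetam = 1 \<and> thetap = 0 \<and>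
            (\<exists>ustar. ustar > up \<and> f ustar - g up = f' ustar * (ustar - up) \<and> um \<ge> ustar))
       \<or> (thetam = 0 \<and> thetap = 1 \<and>
            (\<exists>vstar. vstar < um \<and> f vstar - g um = f' vstar * (vstar - um) \<and> up \<le> vstar))"
  shows "thetap * f' up + (1 - thetap) * g' up \<le> rh_speed f g um thetam up thetap
       \<and> rh_speed f g um thetam up thetap \<le> thetam * f' um + (1 - thetam) * g' um"
proof -
  have gc: "\<And>u. g'' u \<ge> 0" using gconv c0 by (meson less_le_trans less_imp_le not_le)
  have fpos: "\<And>u. f'' u > 0" using fconv c0 by (meson less_le_trans)
  have pos: "um - up > 0" using ord by simp
  from cases show ?thesis
  proof
    assume A: "thetam = 1 \<and> thetap = 0 \<and>
            (\<exists>ustar. ustar > up \<and> f ustar - g up = f' ustar * (ustar - up) \<and> um \<ge> ustar)"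
    then obtain us where us: "us > up" "f us - g up = f' us * (us - up)" "um \<ge> us" by blast
    have lam: "rh_speed f g um thetam up thetap = (f um - g up) / (um - up)"
      using A unfolding rh_speed_def flux_def by (simp add: divide_simps) (simp add: algebra_simps)
    define h where "h u = f' u * (u - up) - (f u - g up)" for u
    have hd: "(h has_real_derivative f'' u * (u - up)) (at u)" for u
      unfolding h_def using f1 f2 by (auto intro!: derivative_eq_intros simp: algebra_simps)
    have "h us \<le> h um"
      apply (rule mono_of_deriv[OF hd])
      using us fpos by (auto intro!: mult_nonneg_nonneg less_imp_le)
    then have r: "f um - g up \<le> f' um * (um - up)" using us unfolding h_def by simp
    have "g um \<ge> g up + g' up * (um - up)" by (rule tangent_below[OF g1 g2 gc])
    then have l: "g' up * (um - up) \<le> f um - g up" using fg[of um] by linarith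
    show ?thesis unfolding lam using A r l pos by (simp add: pos_le_divide_eq pos_divide_le_eq mult.commute)
  next
    assume A: "thetam = 0 \<and> thetap = 1 \<and>
            (\<exists>vstar. vstar < um \<and> f vstar - g um = f' vstar * (vstar - um) \<and> up \<le> vstar)"
    then obtain vs where vs: "vs < um" "f vs - g um = f' vs * (vs - um)" "up \<le> vs" by blast
    have lam: "rh_speed f g um thetam up thetap = (g um - f up) / (um - up)"
      using A unfolding rh_speed_def flux_def by (simp add: divide_simps) (simp add: algebra_simps)
    define k where "k u = g um - f u - f' u * (um - u)" for u
    have kd: "((\<lambda>u. - k u) has_real_derivative f'' u * (um - u)) (at u)" for u
      unfolding k_def using f1 f2 by (auto intro!: derivative_eq_intros simp: algebra_simps)
    have "- k up \<le> - k vs"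
      apply (rule mono_of_deriv[OF kd])
      using vs fpos by (auto intro!: mult_nonneg_nonneg less_imp_le)
    then have l: "f' up * (um - up) \<le> g um - f up" using vs unfolding k_def by (simp add: algebra_simps)
    have "g up \<ge> g um + g' um * (up - um)" by (rule tangent_below[OF g1 g2 gc])
    then have r: "g um - f up \<le> g' um * (um - up)" using fg[of up] by (simp add: algebra_simps)
    show ?thesis unfolding lam using A r l pos by (simp add: pos_le_divide_eq pos_divide_le_eq mult.commute)
  qed
qed

end
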